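(* Let $L,n$ be positive integers and $B\in\mathcal M(L,n)$. Then for all $1\le i\le L-1$ and $1\le j\le n-1$, \[e_i^{\downarrow}(e_j^{\leftarrow}(B))=e_j^{\leftarrow}(e_i^{\downarrow}(B)).\]
   Context: $\mathcal M(L,n)$ is the set of tuples $B=(B_1,\dots,B_L)$ of subsets of $[n]$, viewed as $L\times n$ grids with rows $1..L$ bottom to top and columns $1..n$ left to right, a ball in $(r,j)$ iff $j\in B_r$. $\mathrm{cw}(B)$ scans columns left to right, each top to bottom, recording row numbers of balls. For a word $w$ and $i\ge1$, $\mathrm{Par}_i(w)$ writes "(" for each letter $i+1$ and ")" for each letter $i$, left to right, and iteratively matches a "(" with a ")" to its right when adjacent or separated only by matched parentheses. $e_i^\star(B)$ moves every ball of row $i+1$ whose letter in $\mathrm{cw}(B)$ is unmatched in $\mathrm{Par}_i(\mathrm{cw}(B))$ down to row $i$ in the same column. The rotation $\mathrm{rot}:\mathcal M(L,n)\to\mathcal M(n,L)$ is the $90^\circ$ counterclockwise rotation: the ball in cell $(r,c)$ (row $r$, column $c$) goes to cell $(c,L+1-r)$. Define $e_i^{\downarrow}=e_i^\star$ on $\mathcal M(L,n)$ and $e_j^{\leftarrow}=\mathrm{rot}^{-1}\circ e_j^\star\circ\mathrm{rot}$ (with $e_j^\star$ acting on $\mathcal M(n,L)$). *)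

theory Defs
  imports Main
begin

text \<open>An element of M(L,n) is represented by its set of ball positions:
  a set of cells (r, c) with 1 \<le> r \<le> L (row) and 1 \<le> c \<le> n (column);
  (r, c) is a ball iff c \<in> B_r.\<close>

definition mats :: "nat \<Rightarrow> nat \<Rightarrow> (nat \<times> nat) set set" where
  "mats L n = {B. B \<subseteq> {1..L} \<times> {1..n}}"

text \<open>Column word, remembering the cell of each letter: columns left to right,
  each column top to bottom (rows L down to 1). The letter is the row (fst).\<close>

definition cw :: "nat \<Rightarrow> nat \<Rightarrow> (nat \<times> nat) set \<Rightarrow> (nat \<times> nat) list" where
  "cw L n B = concat (map (\<lambda>c. filter (\<lambda>x. x \<in> B) (map (\<lambda>r. (r, c)) (rev [1..<L+1]))) [1..<n+1])"

text \<open>Bracket matching for Par_i: letter i+1 is "(", letter i is ")".\<close>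

fun par_scan :: "nat \<Rightarrow> nat list \<Rightarrow> nat \<Rightarrow> nat list \<Rightarrow> nat list" where
  "par_scan i [] k st = st"
| "par_scan i (x # w) k st =
     (if x = i + 1 then par_scan i w (Suc k) (k # st)
      else if x = i then par_scan i w (Suc k) (tl st)
      else par_scan i w (Suc k) st)"

definition unmatched_open :: "nat \<Rightarrow> nat list \<Rightarrow> nat set" where
  "unmatched_open i w = set (par_scan i w 0 [])"

definition e_star :: "nat \<Rightarrow> nat \<Rightarrow> nat \<Rightarrow> (nat \<times> nat) set \<Rightarrow> (nat \<times> nat) set" where
  "e_star L n i B =
     (let ws = cw L n B;
          U = (\<lambda>k. ws ! k) ` unmatched_open i (map fst ws)
      in (B - U) \<union> (\<lambda>(r, c). (i, c)) ` U)"

definition rot :: "nat \<Rightarrow> (nat \<times> nat) set \<Rightarrow> (nat \<times> nat) set" where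
  "rot L B = (\<lambda>(r, c). (c, L + 1 - r)) ` B"

definition rot_inv :: "nat \<Rightarrow> (nat \<times> nat) set \<Rightarrow> (nat \<times> nat) set" where
  "rot_inv L B = (\<lambda>(r, c). (L + 1 - c, r)) ` B"

definition e_down :: "nat \<Rightarrow> nat \<Rightarrow> nat \<Rightarrow> (nat \<times> nat) set \<Rightarrow> (nat \<times> nat) set" where
  "e_down L n i B = e_star L n i B"

definition e_left :: "nat \<Rightarrow> nat \<Rightarrow> nat \<Rightarrow> (nat \<times> nat) set \<Rightarrow> (nat \<times> nat) set" where
  "e_left L n j B = rot_inv L (e_star n L j (rot L B))"

end

theory Submission
  imports Defs
begin


fun pc :: "nat \<Rightarrow> nat list \<Rightarrow> nat" where
  "pc i [] = 0"
| "pc i (x # w) = (if x = i + 1 then pc i w - 1 else if x = i then Suc (pc i w) else pc i w)"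

lemma par_scan_stack: "par_scan i w k st = par_scan i w k [] @ drop (pc i w) st"
proof (induction w arbitrary: k st)
  case Nil then show ?case by simp
next
  case (Cons x w)
  show ?case
  proof (cases "x = i + 1")
    case True
    then show ?thesis using Cons.IH[of "Suc k" "k # st"] Cons.IH[of "Suc k" "[k]"]
      by (cases "pc i w") auto
  next
    case False
    then show ?thesis using Cons.IH[of "Suc k" "tl st"] Cons.IH[of "Suc k" "st"] Cons.IH[of "Suc k" "[]"]
      by (auto simp: drop_Suc)
  qed
qed

lemma img_split: "(\<lambda>p. k + p) ` {p. P p} = (if P 0 then {k} else {}) \<union> (\<lambda>p. Suc k + p) ` {p. P (Suc p)}"
  by (auto simp: image_iff) (metis not0_implies_Suc)+

lemma par_scan_set: "set (par_scan i w k []) = (\<lambda>p. k + p) ` {p. p < length w \<and> w ! p = i + 1 \<and> pc i (drop (Suc p) w) = 0}"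
proof (induction w arbitrary: k)
  case Nil then show ?case by simp
next
  case (Cons x w)
  have e: "(\<lambda>p. k + p) ` {p. p < length (x#w) \<and> (x#w) ! p = i + 1 \<and> pc i (drop (Suc p) (x#w)) = 0}
    = (if x = i + 1 \<and> pc i w = 0 then {k} else {}) \<union> (\<lambda>p. Suc k + p) ` {p. p < length w \<and> w ! p = i + 1 \<and> pc i (drop (Suc p) w) = 0}"
    by (subst img_split) simp
  show ?case
  proof (cases "x = i + 1")
    case True
    then show ?thesis unfolding e using Cons.IH[of "Suc k"] par_scan_stack[of i w "Suc k" "[k]"]
      by (cases "pc i w") auto
  next
    case False
    then show ?thesis unfolding e using Cons.IH[of "Suc k"] by auto
  qed
qed

definition vl :: "nat \<Rightarrow> nat \<Rightarrow> int" where
  "vl i x = (if x = i + 1 then 1 else if x = i then -1 else 0)"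

fun gd :: "nat \<Rightarrow> int \<Rightarrow> nat list \<Rightarrow> bool" where
  "gd i m [] = (0 \<le> m)"
| "gd i m (x # w) = (0 \<le> m \<and> gd i (m + vl i x) w)"

lemma gd_nonneg: "gd i m w \<Longrightarrow> 0 \<le> m"
  by (cases w) auto

lemma pc_gd: "(pc i w \<le> m) = gd i (int m) w"
proof (induction w arbitrary: m)
  case Nil then show ?case by simp
next
  case (Cons x w)
  show ?case
  proof (cases "x = i + 1")
    case True
    then show ?thesis using Cons.IH[of "Suc m"] by (auto simp: vl_def add.commute)
  next
    case False
    show ?thesis
    proof (cases "x = i")
      case True
      show ?thesis
      proof (cases m)
        case 0 then show ?thesis using True False gd_nonneg[of i "-1" w] by (auto simp: vl_def)
      next
        case (Suc m') then show ?thesis using True False Cons.IH[of m'] by (auto simp: vl_def)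
      qed
    next
      case False2: False
      then show ?thesis using False Cons.IH[of m] by (auto simp: vl_def)
    qed
  qed
qed

lemma gd_append: "gd i m (w1 @ w2) = (gd i m w1 \<and> gd i (m + sum_list (map (vl i) w1)) w2)"
  by (induction w1 arbitrary: m) (auto simp: gd_nonneg algebra_simps)

lemma gd_zero: "\<forall>x\<in>set w. vl i x = 0 \<Longrightarrow> gd i m w = (0 \<le> m)"
  by (induction w arbitrary: m) auto

lemma sum_zero: "\<forall>x\<in>set w. vl i x = 0 \<Longrightarrow> sum_list (map (vl i) w) = 0"
  by (induction w) auto



definition col :: "nat \<Rightarrow> (nat \<times> nat) set \<Rightarrow> nat \<Rightarrow> (nat \<times> nat) list" where
  "col L B c = filter (\<lambda>x. x \<in> B) (map (\<lambda>r. (r, c)) (rev [1..<L+1]))"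

lemma cw_col: "cw L n B = concat (map (col L B) [1..<n+1])"
  unfolding cw_def col_def by (rule refl)

definition vD :: "nat \<Rightarrow> (nat \<times> nat) set \<Rightarrow> nat \<Rightarrow> int" where
  "vD i B k = of_bool ((i+1,k) \<in> B) - of_bool ((i,k) \<in> B)"

lemma rows_split: "1 \<le> i \<Longrightarrow> i+1 \<le> L \<Longrightarrow> rev [1..<L+1] = rev [i+2..<L+1] @ [i+1, i] @ rev [1..<i]"
proof -
  assume a: "1 \<le> i" "i+1 \<le> L"
  have 1: "[1..<L+1] = [1..<i] @ [i..<L+1]" using upt_add_eq_append[of 1 i "L+1-i"] a by simp
  have 2: "[i..<L+1] = i # (i+1) # [i+2..<L+1]" using a by (simp add: upt_conv_Cons)
  show ?thesis unfolding 1 2 by simp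
qed

lemma col_parts: "1 \<le> i \<Longrightarrow> i+1 \<le> L \<Longrightarrow> col L B c =
   filter (\<lambda>x. x \<in> B) (map (\<lambda>r. (r, c)) (rev [i+2..<L+1])) @ filter (\<lambda>x. x \<in> B) [(i+1,c),(i,c)]
   @ filter (\<lambda>x. x \<in> B) (map (\<lambda>r. (r, c)) (rev [1..<i]))"
proof -
  assume a: "1 \<le> i" "i+1 \<le> L"
  show ?thesis unfolding col_def rows_split[OF a] by simp
qed

lemma top_zero: "\<forall>x\<in>set (map fst (filter (\<lambda>x. x \<in> B) (map (\<lambda>r. (r, c)) (rev [i+2..<L+1])))). vl i x = 0"
  by (auto simp: vl_def)

lemma bot_zero: "\<forall>x\<in>set (map fst (filter (\<lambda>x. x \<in> B) (map (\<lambda>r. (r, c)) (rev [1..<i])))). vl i x = 0"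
  by (auto simp: vl_def)

lemma col_sum: "1 \<le> i \<Longrightarrow> i+1 \<le> L \<Longrightarrow> sum_list (map (vl i) (map fst (col L B c))) = vD i B c"
  apply (simp only: col_parts map_append sum_list_append)
  apply (simp only: sum_zero[OF top_zero] sum_zero[OF bot_zero])
  by (auto simp: vl_def vD_def)

lemma col_gd: "1 \<le> i \<Longrightarrow> i+1 \<le> L \<Longrightarrow> gd i m (map fst (col L B c)) = (0 \<le> m \<and> 0 \<le> m + vD i B c)"
  apply (simp only: col_parts map_append gd_append)
  apply (simp only: sum_zero[OF top_zero] sum_zero[OF bot_zero] gd_zero[OF top_zero] gd_zero[OF bot_zero])
  by (auto simp: vl_def vD_def)

lemma col_sum': "1 \<le> i \<Longrightarrow> i+1 \<le> L \<Longrightarrow> sum_list (map (vl i \<circ> fst) (col L B c)) = vD i B c"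
  using col_sum by (simp add: map_map)

lemma concat_sum: "1 \<le> i \<Longrightarrow> i+1 \<le> L \<Longrightarrow>
  sum_list (map (vl i) (map fst (concat (map (col L B) [a..<b])))) = (\<Sum>k\<in>{a..<b}. vD i B k)"
  by (induction b) (auto simp: col_sum')

lemma concat_gd: "1 \<le> i \<Longrightarrow> i+1 \<le> L \<Longrightarrow>
  gd i m (map fst (concat (map (col L B) [a..<b]))) = (0 \<le> m \<and> (\<forall>d. a \<le> d \<and> d < b \<longrightarrow> 0 \<le> m + (\<Sum>k\<in>{a..<Suc d}. vD i B k)))"
proof (induction b)
  case 0 then show ?case by simp
next
  case (Suc b)
  show ?case
  proof (cases "a \<le> b")
    case False
    then have "[a..<Suc b] = []" "\<forall>d. \<not> (a \<le> d \<and> d < Suc b)" by auto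
    then show ?thesis by (simp del: upt_Suc)
  next
    case True
    have e: "[a..<Suc b] = [a..<b] @ [b]" using True by simp
    have "gd i m (map fst (concat (map (col L B) [a..<Suc b]))) =
      (gd i m (map fst (concat (map (col L B) [a..<b]))) \<and>
       gd i (m + (\<Sum>k\<in>{a..<b}. vD i B k)) (map fst (col L B b)))"
      unfolding e using Suc.prems concat_sum[of i L B a b] by (simp add: gd_append)
    also have "\<dots> = ((0 \<le> m \<and> (\<forall>d. a \<le> d \<and> d < b \<longrightarrow> 0 \<le> m + (\<Sum>k\<in>{a..<Suc d}. vD i B k)))
       \<and> 0 \<le> m + (\<Sum>k\<in>{a..<b}. vD i B k) \<and> 0 \<le> m + (\<Sum>k\<in>{a..<Suc b}. vD i B k))"
      using Suc True by (simp add: col_gd add.assoc)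
    also have "\<dots> = (0 \<le> m \<and> (\<forall>d. a \<le> d \<and> d < Suc b \<longrightarrow> 0 \<le> m + (\<Sum>k\<in>{a..<Suc d}. vD i B k)))"
    proof (cases "a = b")
      case True then show ?thesis by (auto simp: less_Suc_eq)
    next
      case False
      then obtain b' where b': "b = Suc b'" "a \<le> b'" using \<open>a \<le> b\<close>
        by (cases b) auto
      then show ?thesis by (auto simp: less_Suc_eq simp del: sum.op_ivl_Suc)
    qed
    finally show ?thesis .
  qed
qed



definition okseq :: "(nat \<Rightarrow> int) \<Rightarrow> nat \<Rightarrow> nat \<Rightarrow> bool" where
  "okseq v N c = (\<forall>d. c < d \<and> d \<le> N \<longrightarrow> 0 \<le> (\<Sum>k\<in>{c<..d}. v k))"

definition mvD :: "nat \<Rightarrow> nat \<Rightarrow> (nat \<times> nat) set \<Rightarrow> nat \<Rightarrow> bool" where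
  "mvD i n B c = ((i+1,c) \<in> B \<and> (i,c) \<notin> B \<and> 1 \<le> c \<and> c \<le> n \<and> okseq (vD i B) n c)"

lemma distinct_concat_col: "distinct xs \<Longrightarrow> distinct (concat (map (col L B) xs))"
proof (induction xs)
  case Nil then show ?case by simp
next
  case (Cons x xs)
  have d1: "distinct (col L B x)" unfolding col_def
    by (auto intro!: distinct_filter simp: distinct_map inj_on_def)
  have "set (col L B x) \<inter> set (concat (map (col L B) xs)) = {}"
    using Cons.prems by (auto simp: col_def)
  then show ?case using Cons d1 by simp
qed

lemma distinct_cw: "distinct (cw L n B)"
  unfolding cw_col by (rule distinct_concat_col) simp

lemma set_cw: "x \<in> set (cw L n B) \<longleftrightarrow> x \<in> B \<and> 1 \<le> fst x \<and> fst x \<le> L \<and> 1 \<le> snd x \<and> snd x \<le> n"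
  unfolding cw_col
proof (rule iffI)
  assume "x \<in> set (concat (map (col L B) [1..<n+1]))"
  then show "x \<in> B \<and> 1 \<le> fst x \<and> fst x \<le> L \<and> 1 \<le> snd x \<and> snd x \<le> n"
    by (auto simp: col_def)
next
  obtain a b where Pair: "x = (a,b)" by (cases x)
  assume h: "x \<in> B \<and> 1 \<le> fst x \<and> fst x \<le> L \<and> 1 \<le> snd x \<and> snd x \<le> n"
  have "a \<in> set (rev [1..<L+1])" using h Pair by auto
  then have "x \<in> set (col L B b)" using h Pair unfolding col_def by auto
  moreover have "b \<in> set [1..<n+1]" using h Pair by auto
  ultimately show "x \<in> set (concat (map (col L B) [1..<n+1]))" by auto
qed

lemma drop_distinct: "distinct (A @ x # R) \<Longrightarrow> p < length (A @ x # R) \<Longrightarrow> (A @ x # R) ! p = x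
  \<Longrightarrow> drop (Suc p) (A @ x # R) = R"
proof -
  assume a: "distinct (A @ x # R)" "p < length (A @ x # R)" "(A @ x # R) ! p = x"
  have "(A @ x # R) ! length A = x" by simp
  then have "p = length A" using a nth_eq_iff_index_eq[of "A @ x # R" p "length A"] by simp
  then show ?thesis by simp
qed

lemma key:
  assumes i: "1 \<le> i" "i+1 \<le> L" and c: "1 \<le> c" "c \<le> n" "(i+1,c) \<in> B"
    and p: "p < length (cw L n B)" "cw L n B ! p = (i+1,c)"
  shows "gd i 0 (map fst (drop (Suc p) (cw L n B))) = ((i,c) \<notin> B \<and> okseq (vD i B) n c)"
proof -
  define T where "T = filter (\<lambda>x. x \<in> B) (map (\<lambda>r. (r, c)) (rev [i+2..<L+1]))"
  define R0 where "R0 = filter (\<lambda>x. x \<in> B) [(i,c)] @ filter (\<lambda>x. x \<in> B) (map (\<lambda>r. (r, c)) (rev [1..<i]))"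
  define Z where "Z = concat (map (col L B) [Suc c..<n+1])"
  have u: "[1..<n+1] = [1..<c] @ c # [Suc c..<n+1]"
  proof -
    have "[1..<n+1] = [1..<c] @ [c..<n+1]" using upt_add_eq_append[of 1 c "n+1-c"] c by simp
    also have "[c..<n+1] = c # [Suc c..<n+1]" using c by (simp add: upt_conv_Cons)
    finally show ?thesis .
  qed
  have cc: "col L B c = T @ (i+1,c) # R0"
    unfolding col_parts[OF i] T_def R0_def using c by simp
  have ws: "cw L n B = (concat (map (col L B) [1..<c]) @ T) @ (i+1,c) # (R0 @ Z)"
    unfolding cw_col u Z_def by (simp add: cc)
  have dr: "drop (Suc p) (cw L n B) = R0 @ Z"
    using drop_distinct[of "concat (map (col L B) [1..<c]) @ T" "(i+1,c)" "R0 @ Z" p]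
      distinct_cw[of L n B] p unfolding ws by simp
  have bz: "\<forall>x\<in>set (map fst (filter (\<lambda>x. x \<in> B) (map (\<lambda>r. (r, c)) (rev [1..<i])))). vl i x = 0"
    by (rule bot_zero)
  have r0: "gd i 0 (map fst R0) = ((i,c) \<notin> B)"
    and r0s: "(i,c) \<notin> B \<Longrightarrow> sum_list (map (vl i) (map fst R0)) = 0"
    unfolding R0_def map_append gd_append sum_list_append
    by (simp_all only: gd_zero[OF bz] sum_zero[OF bz]) (auto simp: vl_def)
  have z: "gd i 0 (map fst Z) = okseq (vD i B) n c"
  proof -
    have e: "\<And>d. {Suc c..<Suc d} = {c<..d}" by auto
    show ?thesis unfolding Z_def concat_gd[OF i] okseq_def e by auto
  qed
  show ?thesis unfolding dr map_append gd_append using r0 r0s z by auto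
qed

lemma e_star_char:
  assumes i: "1 \<le> i" "i+1 \<le> L"
  shows "e_star L n i B = (B - {(i+1,c) | c. mvD i n B c}) \<union> {(i,c) | c. mvD i n B c}"
proof -
  define ws where "ws = cw L n B"
  define U where "U = (\<lambda>k. ws ! k) ` unmatched_open i (map fst ws)"
  have U: "U = {(i+1,c) | c. mvD i n B c}"
  proof (intro set_eqI iffI)
    fix x assume "x \<in> U"
    then obtain p where p: "p < length ws" "fst (ws ! p) = i + 1"
      "pc i (drop (Suc p) (map fst ws)) = 0" "x = ws ! p"
      unfolding U_def unmatched_open_def par_scan_set by auto
    obtain c where xc: "x = (i+1, c)" using p by (cases "ws ! p") auto
    have "x \<in> set ws" using p by simp
    then have m: "x \<in> B" "1 \<le> c" "c \<le> n" unfolding ws_def set_cw xc by auto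
    have "gd i 0 (map fst (drop (Suc p) ws))" using p(3) pc_gd[of i _ 0] by (simp add: drop_map)
    then have "(i,c) \<notin> B \<and> okseq (vD i B) n c"
      using key[OF i m(2,3)] m(1) p xc unfolding ws_def by auto
    then show "x \<in> {(i+1,c) | c. mvD i n B c}" using m xc by (auto simp: mvD_def)
  next
    fix x assume "x \<in> {(i+1,c) | c. mvD i n B c}"
    then obtain c where xc: "x = (i+1,c)" "mvD i n B c" by auto
    then have "x \<in> set ws" unfolding ws_def set_cw using i by (auto simp: mvD_def)
    then obtain p where p: "p < length ws" "ws ! p = x" by (auto simp: in_set_conv_nth)
    have "gd i 0 (map fst (drop (Suc p) ws))"
      using key[of i L c n B p] i xc p unfolding ws_def by (auto simp: mvD_def)
    then have "pc i (drop (Suc p) (map fst ws)) = 0" using pc_gd[of i _ 0] by (simp add: drop_map)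
    then show "x \<in> U" unfolding U_def unmatched_open_def par_scan_set using p xc
      by (auto intro!: image_eqI[of _ _ p])
  qed
  have "e_star L n i B = (B - U) \<union> (\<lambda>(r, c). (i, c)) ` U"
    unfolding e_star_def U_def ws_def Let_def by simp
  also have "(\<lambda>(r, c). (i, c)) ` U = {(i,c) | c. mvD i n B c}" unfolding U by auto
  finally show ?thesis unfolding U .
qed



lemma sum_ins_top: "c \<le> d \<Longrightarrow> (\<Sum>k\<in>{c<..Suc d}. v k) = (\<Sum>k\<in>{c<..d}. v k) + (v (Suc d) :: int)"
proof -
  assume "c \<le> d"
  then have "{c<..Suc d} = insert (Suc d) {c<..d}" by auto
  then show ?thesis by simp
qed

lemma okseq_local:
  assumes N: "J+1 \<le> N" and eq: "\<forall>k. k \<noteq> J \<and> k \<noteq> J+1 \<longrightarrow> v' k = v k"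
    and sm: "v J + v (J+1) = v' J + v' (J+1)" and b1: "-1 \<le> v J" and b2: "-1 \<le> v' J"
    and loc: "0 \<le> v J + v (J+1) \<longrightarrow> (0 \<le> v J \<longleftrightarrow> 0 \<le> v' J)"
    and c: "c \<noteq> J" "c \<noteq> J+1" and ok: "okseq v N c"
  shows "okseq v' N c"
  unfolding okseq_def
proof (intro allI impI)
  fix d assume d: "c < d \<and> d \<le> N"
  show "0 \<le> (\<Sum>k\<in>{c<..d}. v' k)"
  proof (cases "c < J")
    case False
    then have "J + 1 < c" using c by auto
    then have "(\<Sum>k\<in>{c<..d}. v' k) = (\<Sum>k\<in>{c<..d}. v k)" using eq by (intro sum.cong) auto
    then show ?thesis using ok d unfolding okseq_def by auto
  next
    case True
    have diff: "(\<Sum>k\<in>{c<..d}. v' k) = (\<Sum>k\<in>{c<..d}. v k) + (\<Sum>k\<in>{c<..d} \<inter> {J, J+1}. v' k - v k)"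
    proof -
      have "(\<Sum>k\<in>{c<..d}. v' k - v k) = (\<Sum>k\<in>{c<..d} \<inter> {J, J+1}. v' k - v k)"
        using eq by (intro sum.mono_neutral_right) auto
      then show ?thesis by (simp add: sum_subtractf)
    qed
    consider "d < J" | "d = J" | "J + 1 \<le> d" by linarith
    then show ?thesis
    proof cases
      case 1
      then have "{c<..d} \<inter> {J, J+1} = {}" by auto
      then show ?thesis using diff ok d unfolding okseq_def by auto
    next
      case 3
      then have "{c<..d} \<inter> {J, J+1} = {J, J+1}" using True by auto
      then show ?thesis using diff ok d sm unfolding okseq_def by auto
    next
      case 2
      then have "{c<..d} \<inter> {J, J+1} = {J}" using True by auto
      then have e1: "(\<Sum>k\<in>{c<..d}. v' k) = (\<Sum>k\<in>{c<..J}. v k) + v' J - v J" using diff 2 by simp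
      obtain x where x: "(\<Sum>k\<in>{c<..J}. v k) = x + v J" "0 \<le> x"
      proof (cases "c < J - 1")
        case True
        then have "J = Suc (J - 1)" "c \<le> J - 1" by auto
        then have "(\<Sum>k\<in>{c<..J}. v k) = (\<Sum>k\<in>{c<..J-1}. v k) + v J"
          using sum_ins_top[of c "J-1" v] by simp
        moreover have "0 \<le> (\<Sum>k\<in>{c<..J-1}. v k)" using ok True N unfolding okseq_def by auto
        ultimately show ?thesis using that by blast
      next
        case False
        then have "{c<..J} = {J}" using \<open>c < J\<close> by auto
        then show ?thesis using that[of 0] by simp
      qed
      have o1: "0 \<le> (\<Sum>k\<in>{c<..J}. v k)" using ok True N unfolding okseq_def by auto
      have o2: "0 \<le> (\<Sum>k\<in>{c<..J}. v k) + v (J+1)"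
      proof -
        have "0 \<le> (\<Sum>k\<in>{c<..Suc J}. v k)" using ok True N unfolding okseq_def by auto
        then show ?thesis using sum_ins_top[of c J v] True by simp
      qed
      show ?thesis
      proof (cases "x = 0")
        case True
        then show ?thesis using e1 x o1 o2 loc by auto
      next
        case False
        then show ?thesis using e1 x b2 by auto
      qed
    qed
  qed
qed

lemma okseq_local_iff:
  assumes N: "J+1 \<le> N" and eq: "\<forall>k. k \<noteq> J \<and> k \<noteq> J+1 \<longrightarrow> v' k = v k"
    and sm: "v J + v (J+1) = v' J + v' (J+1)" and b1: "-1 \<le> v J" and b2: "-1 \<le> v' J"
    and loc: "0 \<le> v J + v (J+1) \<longrightarrow> (0 \<le> v J \<longleftrightarrow> 0 \<le> v' J)"
    and c: "c \<noteq> J" "c \<noteq> J+1"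
  shows "okseq v' N c = okseq v N c"
proof
  assume "okseq v N c" then show "okseq v' N c" using okseq_local[OF N eq sm b1 b2 loc c] by blast
next
  assume "okseq v' N c"
  moreover have "\<forall>k. k \<noteq> J \<and> k \<noteq> J+1 \<longrightarrow> v k = v' k" using eq by auto
  ultimately show "okseq v N c" using okseq_local[where v=v' and v'=v and J=J and N=N and c=c] N loc sm b1 b2 c by auto
qed

definition Gs :: "(nat \<Rightarrow> int) \<Rightarrow> nat \<Rightarrow> nat \<Rightarrow> int \<Rightarrow> bool" where
  "Gs v J N x = (\<forall>d. J+1 < d \<and> d \<le> N \<longrightarrow> 0 \<le> x + (\<Sum>k\<in>{J+1<..d}. v k))"

lemma okseq_split: "J+1 \<le> N \<Longrightarrow> okseq v N J = (0 \<le> v (J+1) \<and> Gs v J N (v (J+1)))"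
proof -
  assume N: "J+1 \<le> N"
  have e: "\<And>d. J + 1 < d \<Longrightarrow> (\<Sum>k\<in>{J<..d}. v k) = v (J+1) + (\<Sum>k\<in>{J+1<..d}. v k)"
  proof -
    fix d assume "J + 1 < d"
    then have "{J<..d} = insert (J+1) {J+1<..d}" by auto
    then show "(\<Sum>k\<in>{J<..d}. v k) = v (J+1) + (\<Sum>k\<in>{J+1<..d}. v k)" by simp
  qed
  have e2: "{J<..J+1} = {J+1}" by auto
  show ?thesis
  proof
    assume "okseq v N J"
    then have a: "\<And>d. J < d \<and> d \<le> N \<Longrightarrow> 0 \<le> (\<Sum>k\<in>{J<..d}. v k)" unfolding okseq_def by blast
    have "0 \<le> v (J+1)" using a[of "J+1"] N e2 by simp
    moreover have "Gs v J N (v (J+1))" unfolding Gs_def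
    proof (intro allI impI)
      fix d assume "J + 1 < d \<and> d \<le> N"
      then show "0 \<le> v (J+1) + (\<Sum>k\<in>{J+1<..d}. v k)" using a[of d] e[of d] by simp
    qed
    ultimately show "0 \<le> v (J+1) \<and> Gs v J N (v (J+1))" by blast
  next
    assume h: "0 \<le> v (J+1) \<and> Gs v J N (v (J+1))"
    show "okseq v N J" unfolding okseq_def
    proof (intro allI impI)
      fix d assume d: "J < d \<and> d \<le> N"
      show "0 \<le> (\<Sum>k\<in>{J<..d}. v k)"
      proof (cases "d = J+1")
        case True then show ?thesis using h e2 by simp
      next
        case False then show ?thesis using h d e[of d] unfolding Gs_def by auto
      qed
    qed
  qed
qed

lemma okseq_succ: "okseq v N (J+1) = Gs v J N 0"
  unfolding okseq_def Gs_def by simp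

lemma Gs_mono: "x \<le> y \<Longrightarrow> Gs v J N x \<Longrightarrow> Gs v J N y"
  unfolding Gs_def by force

lemma Gs_cong: "\<forall>k. J+1 < k \<longrightarrow> v' k = v k \<Longrightarrow> Gs v' J N x = Gs v J N x"
  unfolding Gs_def by (auto intro!: sum.cong)



lemma mem_rot: "X \<subseteq> {1..L} \<times> UNIV \<Longrightarrow> (a,b) \<in> rot L X \<longleftrightarrow> 1 \<le> b \<and> b \<le> L \<and> (L+1-b, a) \<in> X"
  unfolding rot_def by (force simp: image_iff)

lemma mem_rot_inv: "Y \<subseteq> UNIV \<times> {1..L} \<Longrightarrow> (a,b) \<in> rot_inv L Y \<longleftrightarrow> 1 \<le> a \<and> a \<le> L \<and> (b, L+1-a) \<in> Y"
  unfolding rot_inv_def by (force simp: image_iff)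

lemma memD:
  assumes "1 \<le> i" "i+1 \<le> L"
  shows "(a,b) \<in> e_down L n i X \<longleftrightarrow> ((a,b) \<in> X \<and> \<not> (a = i+1 \<and> mvD i n X b)) \<or> (a = i \<and> mvD i n X b)"
  unfolding e_down_def e_star_char[OF assms] by auto

definition mvL :: "nat \<Rightarrow> nat \<Rightarrow> (nat \<times> nat) set \<Rightarrow> nat \<Rightarrow> bool" where
  "mvL L j X a = (1 \<le> a \<and> a \<le> L \<and> mvD j L (rot L X) (L+1-a))"

lemma memL:
  assumes X: "X \<subseteq> {1..L} \<times> {1..n}" and j: "1 \<le> j" "j+1 \<le> n"
  shows "(a,b) \<in> e_left L n j X \<longleftrightarrow> ((a,b) \<in> X \<and> \<not> (b = j+1 \<and> mvL L j X a)) \<or> (b = j \<and> mvL L j X a)"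
proof -
  define R where "R = rot L X"
  have XR: "X \<subseteq> {1..L} \<times> UNIV" using X by auto
  have E: "e_star n L j R = (R - {(j+1,c) | c. mvD j L R c}) \<union> {(j,c) | c. mvD j L R c}"
    by (rule e_star_char) (use j in auto)
  have Xa: "\<And>a b. (a,b) \<in> X \<Longrightarrow> 1 \<le> a \<and> a \<le> L" using X by auto
  have RC: "R \<subseteq> UNIV \<times> {1..L}" unfolding R_def rot_def using Xa by fastforce
  have EC: "e_star n L j R \<subseteq> UNIV \<times> {1..L}" unfolding E using RC by (auto simp: mvD_def)
  have "(a,b) \<in> e_left L n j X \<longleftrightarrow> 1 \<le> a \<and> a \<le> L \<and> (b, L+1-a) \<in> e_star n L j R"
    unfolding e_left_def R_def[symmetric] using mem_rot_inv[OF EC] by simp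
  also have "\<dots> \<longleftrightarrow> ((a,b) \<in> X \<and> \<not> (b = j+1 \<and> mvL L j X a)) \<or> (b = j \<and> mvL L j X a)"
  proof (cases "1 \<le> a \<and> a \<le> L")
    case True
    have r: "(b, L+1-a) \<in> R \<longleftrightarrow> (a,b) \<in> X"
      using mem_rot[OF XR, of b "L+1-a"] True unfolding R_def by auto
    have m: "mvL L j X a = mvD j L R (L+1-a)" using True unfolding mvL_def R_def by simp
    show ?thesis unfolding E m using r True by auto
  next
    case False
    then have "(a,b) \<notin> X" "\<not> mvL L j X a" using X by (auto simp: mvL_def)
    then show ?thesis using False by auto
  qed
  finally show ?thesis .
qed

lemma gridD:
  assumes "1 \<le> i" "i+1 \<le> L" "X \<subseteq> {1..L} \<times> {1..n}"
  shows "e_down L n i X \<subseteq> {1..L} \<times> {1..n}"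
  unfolding e_down_def e_star_char[OF assms(1,2)] using assms by (auto simp: mvD_def)

lemma gridL:
  assumes X: "X \<subseteq> {1..L} \<times> {1..n}" and j: "1 \<le> j" "j+1 \<le> n"
  shows "e_left L n j X \<subseteq> {1..L} \<times> {1..n}"
proof
  fix x assume x: "x \<in> e_left L n j X"
  obtain a b where ab: "x = (a,b)" by (cases x)
  have "((a,b) \<in> X \<and> \<not> (b = j+1 \<and> mvL L j X a)) \<or> (b = j \<and> mvL L j X a)"
    using memL[OF X j, of a b] x ab by simp
  then show "x \<in> {1..L} \<times> {1..n}" using X j ab by (auto simp: mvL_def)
qed

lemma vD_rot:
  assumes "X \<subseteq> {1..L} \<times> {1..n}"
  shows "vD j (rot L X) k = of_bool (1 \<le> k \<and> k \<le> L \<and> (L+1-k, j+1) \<in> X) - of_bool (1 \<le> k \<and> k \<le> L \<and> (L+1-k, j) \<in> X)"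
proof -
  have XR: "X \<subseteq> {1..L} \<times> UNIV" using assms by auto
  show ?thesis unfolding vD_def using mem_rot[OF XR] by simp
qed

lemma mvL_unfold:
  assumes X: "X \<subseteq> {1..L} \<times> {1..n}" and a: "1 \<le> a" "a \<le> L"
  shows "mvL L j X a \<longleftrightarrow> (a,j+1) \<in> X \<and> (a,j) \<notin> X \<and> okseq (vD j (rot L X)) L (L+1-a)"
proof -
  have XR: "X \<subseteq> {1..L} \<times> UNIV" using X by auto
  have e: "L + 1 - (L + 1 - a) = a" using a by simp
  show ?thesis unfolding mvL_def mvD_def using mem_rot[OF XR, of _ "L+1-a"] a e by auto
qed

lemma bD1:
  assumes j: "j+1 \<le> n" "1 \<le> j"
  shows "mvD i n X j \<longleftrightarrow> (i+1,j) \<in> X \<and> (i,j) \<notin> X \<and>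
    (if (i+1,j+1) \<in> X \<and> (i,j+1) \<notin> X then Gs (vD i X) j n 1
     else if ((i+1,j+1) \<in> X \<longleftrightarrow> (i,j+1) \<in> X) then Gs (vD i X) j n 0 else False)"
  unfolding mvD_def okseq_split[OF j(1)] using j by (auto simp: vD_def)

lemma bD2:
  assumes j: "j+1 \<le> n"
  shows "mvD i n X (j+1) \<longleftrightarrow> (i+1,j+1) \<in> X \<and> (i,j+1) \<notin> X \<and> Gs (vD i X) j n 0"
  unfolding mvD_def okseq_succ using j by auto

lemma bL1:
  assumes X: "X \<subseteq> {1..L} \<times> {1..n}" and i: "1 \<le> i" "i+1 \<le> L"
  shows "mvL L j X (i+1) \<longleftrightarrow> (i+1,j+1) \<in> X \<and> (i+1,j) \<notin> X \<and>
    (if (i,j+1) \<in> X \<and> (i,j) \<notin> X then Gs (vD j (rot L X)) (L-i) L 1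
     else if ((i,j+1) \<in> X \<longleftrightarrow> (i,j) \<in> X) then Gs (vD j (rot L X)) (L-i) L 0 else False)"
proof -
  have e1: "L + 1 - (i + 1) = L - i" by simp
  have e2: "L - i + 1 \<le> L" using i by simp
  have e4: "1 \<le> L-i+1" "L-i+1 \<le> L" "L+1-(L-i+1) = i" using i by auto
  have e3: "vD j (rot L X) (L - i + 1) = of_bool ((i, j+1) \<in> X) - of_bool ((i,j) \<in> X)"
    using vD_rot[OF X, of j "L-i+1"] e4 by simp
  have i1: "1 \<le> i+1" by simp
  show ?thesis unfolding mvL_unfold[OF X i1 i(2)] e1 okseq_split[OF e2] e3 using i by auto
qed

lemma bL0:
  assumes X: "X \<subseteq> {1..L} \<times> {1..n}" and i: "1 \<le> i" "i+1 \<le> L"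
  shows "mvL L j X i \<longleftrightarrow> (i,j+1) \<in> X \<and> (i,j) \<notin> X \<and> Gs (vD j (rot L X)) (L-i) L 0"
proof -
  have e1: "L + 1 - i = L - i + 1" using i by simp
  have iL: "i \<le> L" using i by simp
  show ?thesis unfolding mvL_unfold[OF X i(1) iL] e1 okseq_succ by auto
qed



lemma fin_I1:
  assumes "h0 \<longrightarrow> h1" "mL1 = (q \<and> \<not> p \<and> (if t \<and> \<not> s then h1 else if t = s then h0 else False))"
    "mL0 = (t \<and> \<not> s \<and> h0)"
  shows "((of_bool p - of_bool s) + (of_bool q - of_bool t) :: int) =
     (of_bool (p \<or> mL1) - of_bool (s \<or> mL0)) + (of_bool (q \<and> \<not> mL1) - of_bool (t \<and> \<not> mL0))"
    "0 \<le> ((of_bool p - of_bool s) + (of_bool q - of_bool t) :: int) \<longrightarrow>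
     (0 \<le> (of_bool p - of_bool s :: int) \<longleftrightarrow> 0 \<le> (of_bool (p \<or> mL1) - of_bool (s \<or> mL0) :: int))"
  using assms by (cases p; cases q; cases s; cases t; cases h0; cases h1; simp)+

lemma fin_I2:
  assumes "g0 \<longrightarrow> g1" "mD1 = (p \<and> \<not> s \<and> (if q \<and> \<not> t then g1 else if q = t then g0 else False))"
    "mD2 = (q \<and> \<not> t \<and> g0)"
  shows "((of_bool q - of_bool p) + (of_bool t - of_bool s) :: int) =
     (of_bool (q \<and> \<not> mD2) - of_bool (p \<and> \<not> mD1)) + (of_bool (t \<or> mD2) - of_bool (s \<or> mD1))"
    "0 \<le> ((of_bool q - of_bool p) + (of_bool t - of_bool s) :: int) \<longrightarrow>
     (0 \<le> (of_bool q - of_bool p :: int) \<longleftrightarrow> 0 \<le> (of_bool (q \<and> \<not> mD2) - of_bool (p \<and> \<not> mD1) :: int))"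
  using assms by (cases p; cases q; cases s; cases t; cases g0; cases g1; simp)+

lemma fin_block:
  assumes "g0 \<longrightarrow> g1" "h0 \<longrightarrow> h1"
  and "mD1 = (p \<and> \<not> s \<and> (if q \<and> \<not> t then g1 else if q = t then g0 else False))"
  and "mD2 = (q \<and> \<not> t \<and> g0)"
  and "mL1 = (q \<and> \<not> p \<and> (if t \<and> \<not> s then h1 else if t = s then h0 else False))"
  and "mL0 = (t \<and> \<not> s \<and> h0)"
  and "p1 = (p \<or> mL1)" "q1 = (q \<and> \<not> mL1)" "s1 = (s \<or> mL0)" "t1 = (t \<and> \<not> mL0)"
  and "p2 = (p \<and> \<not> mD1)" "q2 = (q \<and> \<not> mD2)" "s2 = (s \<or> mD1)" "t2 = (t \<or> mD2)"
  and "nD1 = (p1 \<and> \<not> s1 \<and> (if q1 \<and> \<not> t1 then g1 else if q1 = t1 then g0 else False))"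
  and "nD2 = (q1 \<and> \<not> t1 \<and> g0)"
  and "nL1 = (q2 \<and> \<not> p2 \<and> (if t2 \<and> \<not> s2 then h1 else if t2 = s2 then h0 else False))"
  and "nL0 = (t2 \<and> \<not> s2 \<and> h0)"
  shows "(p1 \<and> \<not> nD1) = (p2 \<or> nL1)" "(q1 \<and> \<not> nD2) = (q2 \<and> \<not> nL1)"
    "(s1 \<or> nD1) = (s2 \<or> nL0)" "(t1 \<or> nD2) = (t2 \<and> \<not> nL0)"
  using assms by argo+

lemma vD_ge: "-1 \<le> vD i X k"
  unfolding vD_def by simp



theorem lemma5p7:
  fixes L n i j :: nat and B :: "(nat \<times> nat) set"
  assumes "L \<ge> 1" and "n \<ge> 1" and "B \<in> mats L n"
    and "1 \<le> i" and "i \<le> L - 1" and "1 \<le> j" and "j \<le> n - 1"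
  shows "e_down L n i (e_left L n j B) = e_left L n j (e_down L n i B)"
proof -
  have iL: "1 \<le> i" "i+1 \<le> L" using assms by auto
  have jn: "1 \<le> j" "j+1 \<le> n" using assms by auto
  have G: "B \<subseteq> {1..L} \<times> {1..n}" using assms(3) by (simp add: mats_def)
  define DB where "DB = e_down L n i B"
  define LB where "LB = e_left L n j B"
  have GD: "DB \<subseteq> {1..L} \<times> {1..n}" unfolding DB_def by (rule gridD[OF iL G])
  have GL: "LB \<subseteq> {1..L} \<times> {1..n}" unfolding LB_def by (rule gridL[OF G jn])
  have db: "\<And>a b. (a,b) \<in> DB \<longleftrightarrow> ((a,b) \<in> B \<and> \<not> (a = i+1 \<and> mvD i n B b)) \<or> (a = i \<and> mvD i n B b)"
    unfolding DB_def by (rule memD[OF iL])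
  have lb: "\<And>a b. (a,b) \<in> LB \<longleftrightarrow> ((a,b) \<in> B \<and> \<not> (b = j+1 \<and> mvL L j B a)) \<or> (b = j \<and> mvL L j B a)"
    unfolding LB_def by (rule memL[OF G jn])
  have lhs: "\<And>a b. (a,b) \<in> e_down L n i LB \<longleftrightarrow> ((a,b) \<in> LB \<and> \<not> (a = i+1 \<and> mvD i n LB b)) \<or> (a = i \<and> mvD i n LB b)"
    by (rule memD[OF iL])
  have rhs: "\<And>a b. (a,b) \<in> e_left L n j DB \<longleftrightarrow> ((a,b) \<in> DB \<and> \<not> (b = j+1 \<and> mvL L j DB a)) \<or> (b = j \<and> mvL L j DB a)"
    by (rule memL[OF GD jn])
  define p where "p = ((i+1,j) \<in> B)"
  define q where "q = ((i+1,j+1) \<in> B)"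
  define s where "s = ((i,j) \<in> B)"
  define t where "t = ((i,j+1) \<in> B)"
  define mD1 where "mD1 = mvD i n B j"
  define mD2 where "mD2 = mvD i n B (j+1)"
  define mL1 where "mL1 = mvL L j B (i+1)"
  define mL0 where "mL0 = mvL L j B i"
  define g0 where "g0 = Gs (vD i B) j n 0"
  define g1 where "g1 = Gs (vD i B) j n 1"
  define h0 where "h0 = Gs (vD j (rot L B)) (L-i) L 0"
  define h1 where "h1 = Gs (vD j (rot L B)) (L-i) L 1"
  have g01: "g0 \<longrightarrow> g1" unfolding g0_def g1_def using Gs_mono[of 0 1] by auto
  have h01: "h0 \<longrightarrow> h1" unfolding h0_def h1_def using Gs_mono[of 0 1] by auto
  have mD1e: "mD1 = (p \<and> \<not> s \<and> (if q \<and> \<not> t then g1 else if q = t then g0 else False))"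
    unfolding mD1_def p_def q_def s_def t_def g0_def g1_def using bD1[OF jn(2) jn(1)] by simp
  have mD2e: "mD2 = (q \<and> \<not> t \<and> g0)"
    unfolding mD2_def q_def t_def g0_def using bD2[OF jn(2)] by simp
  have mL1e: "mL1 = (q \<and> \<not> p \<and> (if t \<and> \<not> s then h1 else if t = s then h0 else False))"
    unfolding mL1_def p_def q_def s_def t_def h0_def h1_def using bL1[OF G iL] by simp
  have mL0e: "mL0 = (t \<and> \<not> s \<and> h0)"
    unfolding mL0_def s_def t_def h0_def using bL0[OF G iL] by simp
  have p1: "((i+1,j) \<in> LB) = (p \<or> mL1)" unfolding p_def mL1_def using lb by simp
  have q1: "((i+1,j+1) \<in> LB) = (q \<and> \<not> mL1)" unfolding q_def mL1_def using lb by simp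
  have s1: "((i,j) \<in> LB) = (s \<or> mL0)" unfolding s_def mL0_def using lb by simp
  have t1: "((i,j+1) \<in> LB) = (t \<and> \<not> mL0)" unfolding t_def mL0_def using lb by simp
  have p2: "((i+1,j) \<in> DB) = (p \<and> \<not> mD1)" unfolding p_def mD1_def using db by simp
  have q2: "((i+1,j+1) \<in> DB) = (q \<and> \<not> mD2)" unfolding q_def mD2_def using db by simp
  have s2: "((i,j) \<in> DB) = (s \<or> mD1)" unfolding s_def mD1_def using db by simp
  have t2: "((i,j+1) \<in> DB) = (t \<or> mD2)" unfolding t_def mD2_def using db by simp
  have vLB: "\<And>k. k \<noteq> j \<Longrightarrow> k \<noteq> j+1 \<Longrightarrow> vD i LB k = vD i B k"
    unfolding vD_def using lb by simp
  have vDB: "\<And>k. k \<noteq> L-i \<Longrightarrow> k \<noteq> L-i+1 \<Longrightarrow> vD j (rot L DB) k = vD j (rot L B) k"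
  proof -
    fix k assume k: "k \<noteq> L-i" "k \<noteq> L-i+1"
    show "vD j (rot L DB) k = vD j (rot L B) k"
    proof (cases "1 \<le> k \<and> k \<le> L")
      case True
      then have "L+1-k \<noteq> i" "L+1-k \<noteq> i+1" using k iL by auto
      then show ?thesis unfolding vD_rot[OF GD] vD_rot[OF G] using db by simp
    next
      case False
      then have f: "\<And>P. (1 \<le> k \<and> k \<le> L \<and> P) = False" by auto
      show ?thesis unfolding vD_rot[OF GD] vD_rot[OF G] f by simp
    qed
  qed
  have gLB: "\<And>x. Gs (vD i LB) j n x = Gs (vD i B) j n x"
    by (rule Gs_cong) (auto intro: vLB)
  have hDB: "\<And>x. Gs (vD j (rot L DB)) (L-i) L x = Gs (vD j (rot L B)) (L-i) L x"
    by (rule Gs_cong) (auto intro: vDB)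
  have nD1: "mvD i n LB j = (((i+1,j) \<in> LB) \<and> \<not> ((i,j) \<in> LB) \<and>
     (if ((i+1,j+1) \<in> LB) \<and> \<not> ((i,j+1) \<in> LB) then g1 else if ((i+1,j+1) \<in> LB) = ((i,j+1) \<in> LB) then g0 else False))"
    unfolding g0_def g1_def using bD1[OF jn(2) jn(1), of i LB] gLB by simp
  have nD2: "mvD i n LB (j+1) = (((i+1,j+1) \<in> LB) \<and> \<not> ((i,j+1) \<in> LB) \<and> g0)"
    unfolding g0_def using bD2[OF jn(2), of i LB] gLB by simp
  have nL1: "mvL L j DB (i+1) = (((i+1,j+1) \<in> DB) \<and> \<not> ((i+1,j) \<in> DB) \<and>
     (if ((i,j+1) \<in> DB) \<and> \<not> ((i,j) \<in> DB) then h1 else if ((i,j+1) \<in> DB) = ((i,j) \<in> DB) then h0 else False))"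
    unfolding h0_def h1_def using bL1[OF GD iL, of j] hDB by simp
  have nL0: "mvL L j DB i = (((i,j+1) \<in> DB) \<and> \<not> ((i,j) \<in> DB) \<and> h0)"
    unfolding h0_def using bL0[OF GD iL, of j] hDB by simp
  note FB = fin_block[OF g01 h01 mD1e mD2e mL1e mL0e p1 q1 s1 t1 p2 q2 s2 t2 nD1 nD2 nL1 nL0]
  have I1: "\<And>c. c \<noteq> j \<Longrightarrow> c \<noteq> j+1 \<Longrightarrow> mvD i n LB c = mvD i n B c"
  proof -
    fix c assume c: "c \<noteq> j" "c \<noteq> j+1"
    have m: "((i+1,c) \<in> LB) = ((i+1,c) \<in> B)" "((i,c) \<in> LB) = ((i,c) \<in> B)" using lb c by auto
    have vj: "vD i B j = of_bool p - of_bool s" "vD i B (j+1) = of_bool q - of_bool t"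
      unfolding vD_def p_def q_def s_def t_def by simp_all
    have vj': "vD i LB j = of_bool (p \<or> mL1) - of_bool (s \<or> mL0)"
       "vD i LB (j+1) = of_bool (q \<and> \<not> mL1) - of_bool (t \<and> \<not> mL0)"
      unfolding vD_def using p1 q1 s1 t1 by simp_all
    have "okseq (vD i LB) n c = okseq (vD i B) n c"
      using okseq_local_iff[where J=j and N=n and v'="vD i LB" and v="vD i B" and c=c]
        jn c vLB vD_ge fin_I1[OF h01 mL1e mL0e] unfolding vj vj' by auto
    then show "mvD i n LB c = mvD i n B c" unfolding mvD_def using m by simp
  qed
  have I2: "\<And>r. r \<noteq> i \<Longrightarrow> r \<noteq> i+1 \<Longrightarrow> mvL L j DB r = mvL L j B r"
  proof -
    fix r assume r: "r \<noteq> i" "r \<noteq> i+1"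
    show "mvL L j DB r = mvL L j B r"
    proof (cases "1 \<le> r \<and> r \<le> L")
      case False then show ?thesis unfolding mvL_def by auto
    next
      case True
      have m: "((r,j+1) \<in> DB) = ((r,j+1) \<in> B)" "((r,j) \<in> DB) = ((r,j) \<in> B)" using db r by auto
      have e1: "1 \<le> L-i" "L-i \<le> L" "L+1-(L-i) = i+1" using iL by auto
      have e2: "1 \<le> L-i+1" "L-i+1 \<le> L" "L+1-(L-i+1) = i" using iL by auto
      have vj: "vD j (rot L B) (L-i) = of_bool q - of_bool p" "vD j (rot L B) (L-i+1) = of_bool t - of_bool s"
        unfolding vD_rot[OF G] p_def q_def s_def t_def using e1 e2 by simp_all
      have vj': "vD j (rot L DB) (L-i) = of_bool (q \<and> \<not> mD2) - of_bool (p \<and> \<not> mD1)"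
         "vD j (rot L DB) (L-i+1) = of_bool (t \<or> mD2) - of_bool (s \<or> mD1)"
        unfolding vD_rot[OF GD] using e1 e2 p2 q2 s2 t2 by simp_all
      have c: "L+1-r \<noteq> L-i" "L+1-r \<noteq> L-i+1" using r True iL by auto
      have N: "L-i+1 \<le> L" using iL by auto
      have "okseq (vD j (rot L DB)) L (L+1-r) = okseq (vD j (rot L B)) L (L+1-r)"
        using okseq_local_iff[where J="L-i" and N=L and v'="vD j (rot L DB)" and v="vD j (rot L B)" and c="L+1-r"]
          N c vDB vD_ge fin_I2[OF g01 mD1e mD2e] unfolding vj vj' by auto
      moreover have r1: "1 \<le> r" "r \<le> L" using True by auto
      ultimately show ?thesis unfolding mvL_unfold[OF GD r1] mvL_unfold[OF G r1] using m by simp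
    qed
  qed
  have "e_down L n i LB = e_left L n j DB"
  proof (rule set_eqI)
    fix x :: "nat \<times> nat"
    obtain a b where x: "x = (a,b)" by (cases x)
    consider "a \<noteq> i \<and> a \<noteq> i+1" "b \<noteq> j \<and> b \<noteq> j+1"
      | "a = i \<or> a = i+1" "b \<noteq> j \<and> b \<noteq> j+1"
      | "a \<noteq> i \<and> a \<noteq> i+1" "b = j \<or> b = j+1"
      | "a = i+1" "b = j" | "a = i+1" "b = j+1" | "a = i" "b = j" | "a = i" "b = j+1"
      by blast
    then show "x \<in> e_down L n i LB \<longleftrightarrow> x \<in> e_left L n j DB"
    proof cases
      case 1 then show ?thesis unfolding x lhs rhs lb db by auto
    next
      case 2 then show ?thesis unfolding x lhs rhs lb db using I1[of b] by auto
    next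
      case 3 then show ?thesis unfolding x lhs rhs lb db using I2[of a] by auto
    next
      case 4 then show ?thesis unfolding x lhs rhs using FB(1) by simp
    next
      case 5 then show ?thesis unfolding x lhs rhs using FB(2) by simp
    next
      case 6 then show ?thesis unfolding x lhs rhs using FB(3) by simp
    next
      case 7 then show ?thesis unfolding x lhs rhs using FB(4) by simp
    qed
  qed
  then show ?thesis unfolding LB_def DB_def .
qed

end
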